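(* Let $B=\{b_1,\ldots,b_n\}\subset\mathbb{R}$ consist of distinct real numbers, with $b_1$ the smallest element of $B$. Suppose that $u_1$ is a trigonometric polynomial which is not identically zero, and that $u_2,\ldots,u_n$ are bounded measurable functions on $\mathbb{R}$. If $f:\mathbb{R}\to\mathbb{C}$ is a measurable function which is not zero almost everywhere and \[ \sum_{j=1}^n u_j(x)f(x+b_j)=0\qquad\text{for a.e. } x\in\mathbb{R}, \] then there exists a constant $c>0$ such that $\limsup_{x\to\infty}|f(x)|e^{cx^2}>0$. In particular, if $f$ is not zero almost everywhere and $\lim_{x\to\infty}|f(x)|e^{cx^2}=0$ for all $c>0$, then $\mathcal G(f,\mathbb{R}^2)$ is linearly independent.
   Context: A trigonometric polynomial is a function $u(x)=\sum_{j=1}^m c_je^{2\pi i a_j x}$ with $a_j\in\mathbb{R}$, $c_j\in\mathbb{C}$ (not necessarily periodic). For $a,b\in\mathbb{R}$, $M_aT_bf(x)=e^{2\pi i a x}f(x-b)$, and $\mathcal G(f,\mathbb{R}^2)=\{M_aT_bf:a,b\in\mathbb{R}\}$. Measurable functions equal almost everywhere are identified; $\mathcal G(f,\mathbb{R}^2)$ is linearly independent if every finite linear combination $\sum c_{(a,b)}M_aT_bf$ over distinct pairs $(a,b)$ with coefficients not all zero is not zero almost everywhere. *)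

theory Defs
  imports "HOL-Analysis.Analysis"
begin

definition trig_poly :: "(real \<Rightarrow> complex) \<Rightarrow> bool" where
  "trig_poly u \<longleftrightarrow> (\<exists>(m::nat) (a::nat \<Rightarrow> real) (c::nat \<Rightarrow> complex).
      u = (\<lambda>x. \<Sum>j<m. c j * exp (2 * of_real pi * \<i> * of_real (a j * x))))"

definition MT :: "real \<Rightarrow> real \<Rightarrow> (real \<Rightarrow> complex) \<Rightarrow> real \<Rightarrow> complex" where
  "MT a b f x = exp (2 * of_real pi * \<i> * of_real (a * x)) * f (x - b)"

definition gabor_lin_indep :: "(real \<Rightarrow> complex) \<Rightarrow> bool" where
  "gabor_lin_indep f \<longleftrightarrow>
     (\<forall>(S::(real \<times> real) set) (c::real \<times> real \<Rightarrow> complex).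
        finite S \<longrightarrow> (\<exists>p\<in>S. c p \<noteq> 0) \<longrightarrow>
        \<not> (AE x in lborel. (\<Sum>p\<in>S. c p * MT (fst p) (snd p) f x) = 0))"

end

theory Submission
  imports Defs
begin


definition es :: "(real \<Rightarrow> complex) \<Rightarrow> (real \<Rightarrow> real) \<Rightarrow> real set \<Rightarrow> real \<Rightarrow> complex" where
  "es W F L y = (\<Sum>l\<in>L. W l * exp (\<i> * of_real (F l * y)))"

lemma exp_i_vd:
  "((\<lambda>y. exp (\<i> * of_real (l * y))) has_vector_derivative (\<i> * of_real l) * exp (\<i> * of_real (l * y))) (at y within T)"
proof -
  have e: "(\<lambda>y. exp (\<i> * of_real (l * y))) = (\<lambda>y. exp (y *\<^sub>R (\<i> * of_real l)))"
    by (auto simp: scaleR_conv_of_real mult_ac)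
  show ?thesis unfolding e using exp_scaleR_has_vector_derivative_right[of "\<i> * of_real l" y T]
    by (simp add: scaleR_conv_of_real mult_ac)
qed

lemma es_vd: "finite L \<Longrightarrow> (es W F L has_vector_derivative es (\<lambda>l. W l * (\<i> * of_real (F l))) F L y) (at y within T)"
  unfolding es_def
  apply (rule has_vector_derivative_eq_rhs)
   apply (rule has_vector_derivative_sum)
   apply (rule has_vector_derivative_mult_right)
   apply (rule exp_i_vd[of "F _"])
  apply (simp add: mult_ac)
  done

lemma es_norm_le: "cmod (es W F L y) \<le> (\<Sum>l\<in>L. cmod (W l))"
  unfolding es_def by (rule order_trans[OF norm_sum]) (simp add: norm_mult)

lemma es_lipschitz:
  assumes "finite L"
  shows "cmod (es W F L x - es W F L y) \<le> (\<Sum>l\<in>L. cmod (W l * (\<i> * of_real (F l)))) * 3 * \<bar>x - y\<bar>"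
proof -
  let ?W' = "\<lambda>l. W l * (\<i> * of_real (F l))"
  let ?B = "(\<Sum>l\<in>L. cmod (?W' l))"
  have bd: "norm (es ?W' F L z - es ?W' F L y) \<le> 2 * ?B" for z
  proof -
    have "norm (es ?W' F L z - es ?W' F L y) \<le> norm (es ?W' F L z) + norm (es ?W' F L y)"
      by (rule norm_triangle_ineq4)
    also have "\<dots> \<le> ?B + ?B" by (intro add_mono es_norm_le)
    finally show ?thesis by simp
  qed
  have "norm (es W F L x - es W F L y - (x - y) *\<^sub>R es ?W' F L y) \<le> norm (x - y) * (2 * ?B)"
  proof (rule vector_differentiable_bound_linearization[where S=UNIV and f' = "es ?W' F L" and ?x0.0=y])
    show "\<And>z. z \<in> UNIV \<Longrightarrow> (es W F L has_vector_derivative es ?W' F L z) (at z within UNIV)"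
      by (rule es_vd[OF assms])
  qed (use bd in auto)
  moreover have "norm ((x - y) *\<^sub>R es ?W' F L y) \<le> \<bar>x - y\<bar> * ?B"
    using es_norm_le[of ?W' F L y] by (simp add: mult_left_mono)
  moreover have "norm (es W F L x - es W F L y) \<le> norm ((x - y) *\<^sub>R es ?W' F L y)
      + norm (es W F L x - es W F L y - (x - y) *\<^sub>R es ?W' F L y)"
    by (rule norm_triangle_sub)
  ultimately have "norm (es W F L x - es W F L y) \<le> \<bar>x - y\<bar> * ?B + \<bar>x - y\<bar> * (2 * ?B)"
    by simp
  then show ?thesis by (simp add: algebra_simps)
qed




lemma diam_measure:
  fixes S :: "real set"
  assumes "\<And>x y. x \<in> S \<Longrightarrow> y \<in> S \<Longrightarrow> x \<le> y \<Longrightarrow> y - x \<le> L" "0 \<le> L"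
  shows "emeasure lborel S \<le> ennreal (2 * L)"
proof (cases "S = {}")
  case True then show ?thesis by simp
next
  case False
  then obtain y0 where y0: "y0 \<in> S" by blast
  have "S \<subseteq> {y0 - L .. y0 + L}"
  proof
    fix y assume "y \<in> S"
    then show "y \<in> {y0 - L .. y0 + L}"
      using assms(1)[OF y0 \<open>y\<in>S\<close>] assms(1)[OF \<open>y\<in>S\<close> y0] by (cases "y0 \<le> y") auto
  qed
  then have "emeasure lborel S \<le> emeasure lborel {y0 - L .. y0 + L}"
    by (intro emeasure_mono) auto
  also have "\<dots> = ennreal (2 * L)" using assms(2) by simp
  finally show ?thesis .
qed

lemma window_piece:
  fixes g g' :: "real \<Rightarrow> complex"
  assumes vd: "\<And>y. (g has_vector_derivative g' y) (at y)"
    and lip: "\<And>x y. cmod (g' x - g' y) \<le> B * \<bar>x - y\<bar>"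
    and B: "B > 0" and rho: "\<rho> > 0" and eps: "\<epsilon> > 0"
    and x0: "cmod (g' x0) \<ge> \<rho>"
    and W: "\<And>y. y \<in> W \<Longrightarrow> \<bar>y - x0\<bar> \<le> \<rho> / (2 * B)"
  shows "emeasure lborel {y\<in>W. cmod (g y) < \<epsilon>} \<le> ennreal (8 * \<epsilon> / \<rho>)"
proof -
  define c where "c = g' x0"
  have cpos: "cmod c \<ge> \<rho>" using x0 c_def by simp
  define \<phi> where "\<phi> y = Re (cnj c * g y)" for y
  have dphi: "(\<phi> has_real_derivative Re (cnj c * g' y)) (at y)" for y
    unfolding \<phi>_def by (intro has_field_derivative_Re has_vector_derivative_mult_right vd)
  have phib: "\<bar>\<phi> y\<bar> \<le> cmod c * cmod (g y)" for y
    unfolding \<phi>_def using abs_Re_le_cmod[of "cnj c * g y"] by (simp add: norm_mult)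
  have key: "y2 - y1 \<le> 4 * \<epsilon> / \<rho>"
    if y1: "y1 \<in> {y\<in>W. cmod (g y) < \<epsilon>}" and y2: "y2 \<in> {y\<in>W. cmod (g y) < \<epsilon>}" and le: "y1 \<le> y2" for y1 y2
  proof (cases "y1 = y2")
    case True then show ?thesis using eps rho by simp
  next
    case False
    with le have lt: "y1 < y2" by simp
    obtain z where z: "y1 < z" "z < y2" "\<phi> y2 - \<phi> y1 = (y2 - y1) * Re (cnj c * g' z)"
      using MVT2[OF lt, of \<phi> "\<lambda>y. Re (cnj c * g' y)"] dphi by blast
    have "\<bar>z - x0\<bar> \<le> \<rho> / (2 * B)"
      using W[of y1] W[of y2] y1 y2 z by auto
    then have "cmod (g' z - c) \<le> \<rho> / 2"
    proof -
      have "B * \<bar>z - x0\<bar> \<le> B * (\<rho> / (2 * B))"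
        using \<open>\<bar>z - x0\<bar> \<le> \<rho> / (2 * B)\<close> B by (intro mult_left_mono) auto
      also have "\<dots> = \<rho> / 2" using B by (simp add: field_simps)
      finally show ?thesis using lip[of z x0] unfolding c_def by linarith
    qed
    have rc: "Re (cnj c * c) = cmod c ^ 2" by (simp add: cmod_power2 power2_eq_square[symmetric])
    have "Re (cnj c * g' z) = Re (cnj c * c) + Re (cnj c * (g' z - c))"
      by (simp add: algebra_simps)
    then have "Re (cnj c * g' z) = cmod c ^ 2 + Re (cnj c * (g' z - c))" using rc by simp
    moreover have "\<bar>Re (cnj c * (g' z - c))\<bar> \<le> cmod c * (\<rho> / 2)"
    proof -
      have "\<bar>Re (cnj c * (g' z - c))\<bar> \<le> cmod c * cmod (g' z - c)"
        using abs_Re_le_cmod[of "cnj c * (g' z - c)"] by (simp add: norm_mult)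
      also have "\<dots> \<le> cmod c * (\<rho> / 2)"
        by (intro mult_left_mono \<open>cmod (g' z - c) \<le> \<rho> / 2\<close>) simp
      finally show ?thesis .
    qed
    moreover have "cmod c * \<rho> \<le> cmod c * cmod c"
      using cpos by (intro mult_left_mono) auto
    ultimately have "Re (cnj c * g' z) \<ge> cmod c ^ 2 / 2"
      unfolding power2_eq_square by linarith
    moreover have "\<phi> y2 - \<phi> y1 < 2 * cmod c * \<epsilon>"
    proof -
      have cp: "cmod c > 0" using cpos rho by linarith
      have "cmod c * cmod (g y) < cmod c * \<epsilon>" if "cmod (g y) < \<epsilon>" for y
        using that cp by simp
      then have "\<bar>\<phi> y1\<bar> < cmod c * \<epsilon>" "\<bar>\<phi> y2\<bar> < cmod c * \<epsilon>"
        using phib[of y1] phib[of y2] y1 y2 by force+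
      then show ?thesis by linarith
    qed
    moreover have "(y2 - y1) * (cmod c ^ 2 / 2) \<le> (y2 - y1) * Re (cnj c * g' z)"
      using lt calculation(1) by (intro mult_left_mono) auto
    ultimately have "(y2 - y1) * (cmod c ^ 2 / 2) < 2 * cmod c * \<epsilon>"
      using z(3) by linarith
    then have "((y2 - y1) * cmod c) * cmod c < (4 * \<epsilon>) * cmod c"
      by (simp add: power2_eq_square algebra_simps)
    then have "(y2 - y1) * cmod c < 4 * \<epsilon>"
      using cpos rho by (meson mult_less_cancel_right_pos order_less_le_trans)
    moreover have "cmod c > 0" using cpos rho by linarith
    ultimately have "y2 - y1 < 4 * \<epsilon> / cmod c"
      by (simp add: pos_less_divide_eq)
    also have "\<dots> \<le> 4 * \<epsilon> / \<rho>"
      using cpos rho eps by (simp add: frac_le)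
    finally show ?thesis by simp
  qed
  have "emeasure lborel {y\<in>W. cmod (g y) < \<epsilon>} \<le> ennreal (2 * (4 * \<epsilon> / \<rho>))"
    by (rule diam_measure) (use key eps rho in auto)
  then show ?thesis by simp
qed

lemma window:
  fixes g g' :: "real \<Rightarrow> complex"
  assumes vd: "\<And>y. (g has_vector_derivative g' y) (at y)"
    and lip: "\<And>x y. cmod (g' x - g' y) \<le> B * \<bar>x - y\<bar>"
    and gm[measurable]: "g \<in> borel_measurable borel" and g'm[measurable]: "g' \<in> borel_measurable borel"
    and B: "B > 0" and rho: "\<rho> > 0" "\<rho> \<le> 1" and eps: "\<epsilon> > 0"
  shows "emeasure lborel {x\<in>{a..a+1}. cmod (g x) < \<epsilon>}
    \<le> emeasure lborel {x\<in>{a..a+1}. cmod (g' x) < \<rho>} + ennreal ((2 * B + 3) * 8 * \<epsilon> / \<rho>^2)"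
proof -
  define N :: nat where "N = nat \<lceil>2 * B / \<rho>\<rceil> + 1"
  have N1: "real N \<ge> 2 * B / \<rho>" unfolding N_def by linarith
  have N2: "real N \<le> 2 * B / \<rho> + 2"
  proof -
    have "0 \<le> 2 * B / \<rho>" using B rho by simp
    then have "real (nat \<lceil>2 * B / \<rho>\<rceil>) = of_int \<lceil>2 * B / \<rho>\<rceil>" by simp
    then show ?thesis unfolding N_def by linarith
  qed
  have Npos: "real N > 0" unfolding N_def by simp
  define Wk where "Wk k = {x\<in>{a..a+1}. real k \<le> (x - a) * N \<and> (x - a) * N \<le> real k + 1}" for k :: nat
  define G where "G = {k\<in>{..N}. \<exists>x0\<in>Wk k. \<rho> \<le> cmod (g' x0)}"
  define A where "A = {x\<in>{a..a+1}. cmod (g' x) < \<rho>}"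
  define S where "S = {x\<in>{a..a+1}. cmod (g x) < \<epsilon>}"
  define U where "U = (\<Union>k\<in>G. {y\<in>Wk k. cmod (g y) < \<epsilon>})"
  have Wm[measurable]: "Wk k \<in> sets lborel" for k unfolding Wk_def by measurable
  have Am[measurable]: "A \<in> sets lborel" unfolding A_def by measurable
  have Pm: "{y\<in>Wk k. cmod (g y) < \<epsilon>} \<in> sets lborel" for k
  proof -
    have "{y\<in>Wk k. cmod (g y) < \<epsilon>} = Wk k \<inter> {y. cmod (g y) < \<epsilon>}" by auto
    moreover have "{y. cmod (g y) < \<epsilon>} \<in> sets lborel" by measurable
    ultimately show ?thesis using Wm by auto
  qed
  have finG: "finite G" unfolding G_def by auto
  have Um: "U \<in> sets lborel" unfolding U_def using Pm finG by auto
  have sub: "S \<subseteq> A \<union> U"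
  proof
    fix x assume xS: "x \<in> S"
    define k where "k = nat \<lfloor>(x - a) * N\<rfloor>"
    have xI: "a \<le> x" "x \<le> a + 1" using xS S_def by auto
    have "0 \<le> (x - a) * N" using xI Npos by simp
    moreover have "(x - a) * N \<le> N" using xI Npos by (simp add: mult_left_le_one_le)
    ultimately have kx: "real k \<le> (x - a) * N" "(x - a) * N \<le> real k + 1" "k \<le> N"
      unfolding k_def by (linarith, linarith, simp add: nat_le_iff floor_le_iff)
    have xW: "x \<in> Wk k" unfolding Wk_def using xI kx by auto
    show "x \<in> A \<union> U"
    proof (cases "k \<in> G")
      case True then show ?thesis using xW xS unfolding U_def S_def by auto
    next
      case False
      then have "cmod (g' x) < \<rho>" using xW kx(3) unfolding G_def by auto
      then show ?thesis using xI unfolding A_def by auto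
    qed
  qed
  have piece: "emeasure lborel {y\<in>Wk k. cmod (g y) < \<epsilon>} \<le> ennreal (8 * \<epsilon> / \<rho>)" if kG: "k \<in> G" for k
  proof -
    obtain x0 where x0: "x0 \<in> Wk k" "\<rho> \<le> cmod (g' x0)" using kG by (auto simp: G_def)
    show ?thesis
    proof (rule window_piece[OF vd lip B rho(1) eps x0(2)])
      fix y assume y: "y \<in> Wk k"
      have "\<bar>(y - x0) * N\<bar> \<le> 1" using y x0(1) unfolding Wk_def by (auto simp: algebra_simps)
      then have "\<bar>y - x0\<bar> * N \<le> 1" using Npos by (simp add: abs_mult)
      then have "\<bar>y - x0\<bar> \<le> 1 / N" using Npos by (simp add: pos_le_divide_eq)
      also have "\<dots> \<le> \<rho> / (2 * B)" using N1 B rho Npos by (simp add: field_simps)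
      finally show "\<bar>y - x0\<bar> \<le> \<rho> / (2 * B)" .
    qed
  qed
  have "emeasure lborel S \<le> emeasure lborel (A \<union> U)"
    by (rule emeasure_mono[OF sub]) (rule sets.Un[OF Am Um])
  also have "\<dots> \<le> emeasure lborel A + emeasure lborel U"
    by (rule emeasure_subadditive[OF Am Um])
  also have "emeasure lborel U \<le> (\<Sum>k\<in>G. emeasure lborel {y\<in>Wk k. cmod (g y) < \<epsilon>})"
    unfolding U_def by (rule emeasure_subadditive_finite) (use finG Pm in auto)
  also have "\<dots> \<le> (\<Sum>k\<in>G. ennreal (8 * \<epsilon> / \<rho>))"
    by (rule sum_mono) (rule piece)
  also have "\<dots> = ennreal (real (card G) * (8 * \<epsilon> / \<rho>))"
    by (simp only: sum_constant ennreal_of_nat_eq_real_of_nat) (rule ennreal_mult'[symmetric], simp)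
  also have "\<dots> \<le> ennreal ((2 * B + 3) * 8 * \<epsilon> / \<rho>^2)"
  proof (rule ennreal_leI)
    have "card G \<le> card {..N}" unfolding G_def by (rule card_mono) auto
    then have "real (card G) \<le> real N + 1" by simp
    also have "\<dots> \<le> (2 * B + 3) / \<rho>"
      using N2 rho by (simp add: field_simps)
    finally have cG: "real (card G) \<le> (2 * B + 3) / \<rho>" .
    have "real (card G) * (8 * \<epsilon> / \<rho>) \<le> (2 * B + 3) / \<rho> * (8 * \<epsilon> / \<rho>)"
      using eps rho by (intro mult_right_mono cG) auto
    also have "\<dots> = (2 * B + 3) * 8 * \<epsilon> / \<rho>^2" by (simp add: power2_eq_square)
    finally show "real (card G) * (8 * \<epsilon> / \<rho>) \<le> (2 * B + 3) * 8 * \<epsilon> / \<rho>^2" .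
  qed
  finally show ?thesis unfolding S_def A_def by (simp add: add_left_mono)
qed




lemma es_cont: "finite L \<Longrightarrow> continuous_on UNIV (es W F L)"
  by (rule continuous_on_vector_derivative) (rule es_vd)

lemma es_meas[measurable]: "finite L \<Longrightarrow> es W F L \<in> borel_measurable borel"
  by (rule borel_measurable_continuous_onI) (rule es_cont)

lemma sub_singleton:
  assumes "W m \<noteq> 0"
  shows "\<exists>K \<alpha>. K > 0 \<and> \<alpha> > 0 \<and> (\<forall>a \<epsilon>. 0 < \<epsilon> \<longrightarrow> \<epsilon> \<le> 1 \<longrightarrow>
     emeasure lborel {x\<in>{a..a+1}. cmod (es W id {m} x) < \<epsilon>} \<le> ennreal (K * \<epsilon> powr \<alpha>))"
proof (intro exI conjI allI impI)
  show "1 / cmod (W m) > 0" "(1::real) > 0" using assms by auto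
  fix a \<epsilon> :: real assume e: "0 < \<epsilon>" "\<epsilon> \<le> 1"
  have n: "cmod (es W id {m} x) = cmod (W m)" for x by (simp add: es_def norm_mult)
  show "emeasure lborel {x\<in>{a..a+1}. cmod (es W id {m} x) < \<epsilon>} \<le> ennreal (1 / cmod (W m) * \<epsilon> powr 1)"
  proof (cases "\<epsilon> \<le> cmod (W m)")
    case True
    then have "{x\<in>{a..a+1}. cmod (es W id {m} x) < \<epsilon>} = {}" using n by auto
    then show ?thesis by (metis emeasure_empty zero_le)
  next
    case False
    have "emeasure lborel {x\<in>{a..a+1}. cmod (es W id {m} x) < \<epsilon>} \<le> emeasure lborel {a..a+1}"
      by (rule emeasure_mono) auto
    also have "\<dots> = ennreal 1" by simp
    also have "\<dots> \<le> ennreal (1 / cmod (W m) * \<epsilon> powr 1)"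
      using False e assms by (intro ennreal_leI) (simp add: field_simps)
    finally show ?thesis .
  qed
qed

lemma sub:
  assumes "finite L" "L \<noteq> {}"
  shows "(\<forall>l\<in>L. W l \<noteq> 0) \<Longrightarrow> \<exists>K \<alpha>. K > 0 \<and> \<alpha> > 0 \<and> (\<forall>a \<epsilon>. 0 < \<epsilon> \<longrightarrow> \<epsilon> \<le> 1 \<longrightarrow>
     emeasure lborel {x\<in>{a..a+1}. cmod (es W id L x) < \<epsilon>} \<le> ennreal (K * \<epsilon> powr \<alpha>))"
  using assms
proof (induction L arbitrary: W rule: finite_ne_induct)
  case (singleton m)
  then show ?case using sub_singleton[of W m] by blast
next
  case (insert m L0)
  define W' where "W' l = W l * (\<i> * of_real (l - m))" for l
  have W'nz: "\<forall>l\<in>L0. W' l \<noteq> 0" using insert by (auto simp: W'_def)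
  obtain K0 \<alpha>0 where K0: "K0 > 0" "\<alpha>0 > 0"
    and IH: "\<And>a \<epsilon>. 0 < \<epsilon> \<Longrightarrow> \<epsilon> \<le> 1 \<Longrightarrow>
     emeasure lborel {x\<in>{a..a+1}. cmod (es W' id L0 x) < \<epsilon>} \<le> ennreal (K0 * \<epsilon> powr \<alpha>0)"
    using insert.IH[OF W'nz] by blast
  define F where "F l = l - m" for l
  define g where "g y = W m + es W F L0 y" for y
  define g' where "g' = es W' F L0"
  define B where "B = (\<Sum>l\<in>L0. cmod (W' l * (\<i> * of_real (F l)))) * 3 + 1"
  have "0 \<le> (\<Sum>l\<in>L0. cmod (W' l * (\<i> * of_real (F l))))" by (rule sum_nonneg) simp
  then have Bpos: "B > 0" unfolding B_def by linarith
  have vd: "(g has_vector_derivative g' y) (at y)" for y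
  proof -
    have "((\<lambda>y. W m + es W F L0 y) has_vector_derivative (0 + es (\<lambda>l. W l * (\<i> * of_real (F l))) F L0 y)) (at y)"
      by (intro has_vector_derivative_add has_vector_derivative_const es_vd[OF insert(1)])
    then show ?thesis unfolding g_def g'_def W'_def F_def by simp
  qed
  have lip: "cmod (g' x - g' y) \<le> B * \<bar>x - y\<bar>" for x y
  proof -
    have "cmod (g' x - g' y) \<le> (\<Sum>l\<in>L0. cmod (W' l * (\<i> * of_real (F l)))) * 3 * \<bar>x - y\<bar>"
      unfolding g'_def by (rule es_lipschitz[OF insert(1)])
    also have "\<dots> \<le> B * \<bar>x - y\<bar>" unfolding B_def by (intro mult_right_mono) auto
    finally show ?thesis .
  qed
  have gm: "g \<in> borel_measurable borel" unfolding g_def using insert(1) by measurable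
  have g'm: "g' \<in> borel_measurable borel" unfolding g'_def using insert(1) by measurable
  have ng: "cmod (g y) = cmod (es W id (insert m L0) y)" for y
  proof -
    have "es W id (insert m L0) y = exp (\<i> * of_real (m * y)) * g y"
      unfolding g_def es_def F_def using insert
      by (simp add: distrib_left sum_distrib_left algebra_simps flip: exp_add)
    then show ?thesis by (simp add: norm_mult)
  qed
  have ng': "cmod (g' y) = cmod (es W' id L0 y)" for y
  proof -
    have "es W' id L0 y = exp (\<i> * of_real (m * y)) * g' y"
      unfolding g'_def es_def F_def using insert
      by (simp add: distrib_left sum_distrib_left algebra_simps flip: exp_add)
    then show ?thesis by (simp add: norm_mult)
  qed
  define \<alpha> where "\<alpha> = min (1/3) (\<alpha>0 / 3)"
  define K where "K = K0 + (2 * B + 3) * 8"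
  show ?case
  proof (intro exI conjI allI impI)
    show "K > 0" "\<alpha> > 0" using K0 Bpos unfolding K_def \<alpha>_def by auto
    fix a \<epsilon> :: real assume e: "0 < \<epsilon>" "\<epsilon> \<le> 1"
    define \<rho> where "\<rho> = \<epsilon> powr (1/3)"
    have rho: "\<rho> > 0" "\<rho> \<le> 1" unfolding \<rho>_def using e by (auto intro: powr_le1)
    have m1: "emeasure lborel {x\<in>{a..a+1}. cmod (es W id (insert m L0) x) < \<epsilon>}
        = emeasure lborel {x\<in>{a..a+1}. cmod (g x) < \<epsilon>}" by (simp add: ng)
    have m2: "emeasure lborel {x\<in>{a..a+1}. cmod (g x) < \<epsilon>} \<le> emeasure lborel {x\<in>{a..a+1}. cmod (g' x) < \<rho>} + ennreal ((2 * B + 3) * 8 * \<epsilon> / \<rho>^2)"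
      by (rule window[OF vd lip gm g'm Bpos rho e(1)])
    have m3: "emeasure lborel {x\<in>{a..a+1}. cmod (g' x) < \<rho>} \<le> ennreal (K0 * \<epsilon> powr (\<alpha>0 / 3))"
    proof -
      have "\<rho> powr \<alpha>0 = \<epsilon> powr (\<alpha>0 / 3)"
        unfolding \<rho>_def using e by (simp add: powr_powr)
      then show ?thesis unfolding ng' using IH[OF rho] by simp
    qed
    have m4: "(2 * B + 3) * 8 * \<epsilon> / \<rho>^2 = (2 * B + 3) * 8 * \<epsilon> powr (1/3)"
    proof -
      have "\<rho>^2 = \<epsilon> powr (2/3)" unfolding \<rho>_def using e
        by (simp add: powr_powr flip: powr_realpow)
      moreover have "\<epsilon> powr (1/3) * \<epsilon> powr (2/3) = \<epsilon>"
        using e by (simp flip: powr_add)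
      moreover have "\<epsilon> powr (2/3) > 0" using e by simp
      ultimately show ?thesis by (simp add: field_simps)
    qed
    have "emeasure lborel {x\<in>{a..a+1}. cmod (es W id (insert m L0) x) < \<epsilon>}
       \<le> ennreal (K0 * \<epsilon> powr (\<alpha>0 / 3)) + ennreal ((2 * B + 3) * 8 * \<epsilon> powr (1/3))"
      using m2 m3 unfolding m1 m4 by (meson add_right_mono order_trans)
    also have "ennreal (K0 * \<epsilon> powr (\<alpha>0 / 3)) + ennreal ((2 * B + 3) * 8 * \<epsilon> powr (1/3))
        \<le> ennreal (K * \<epsilon> powr \<alpha>)"
    proof -
      have p1: "\<epsilon> powr (\<alpha>0 / 3) \<le> \<epsilon> powr \<alpha>" unfolding \<alpha>_def
        by (rule powr_mono') (use e in auto)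
      have p2: "\<epsilon> powr (1/3) \<le> \<epsilon> powr \<alpha>" unfolding \<alpha>_def
        by (rule powr_mono') (use e in auto)
      have "K0 * \<epsilon> powr (\<alpha>0 / 3) + (2 * B + 3) * 8 * \<epsilon> powr (1/3) \<le> K0 * \<epsilon> powr \<alpha> + (2 * B + 3) * 8 * \<epsilon> powr \<alpha>"
        using K0 Bpos p1 p2 by (intro add_mono mult_left_mono) auto
      also have "\<dots> = K * \<epsilon> powr \<alpha>" unfolding K_def by (simp add: algebra_simps)
      finally have le: "K0 * \<epsilon> powr (\<alpha>0 / 3) + (2 * B + 3) * 8 * \<epsilon> powr (1/3) \<le> K * \<epsilon> powr \<alpha>" .
      have "ennreal (K0 * \<epsilon> powr (\<alpha>0 / 3)) + ennreal ((2 * B + 3) * 8 * \<epsilon> powr (1/3))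
         = ennreal (K0 * \<epsilon> powr (\<alpha>0 / 3) + (2 * B + 3) * 8 * \<epsilon> powr (1/3))"
        by (rule ennreal_plus[symmetric]) (use K0 Bpos in auto)
      also have "\<dots> \<le> ennreal (K * \<epsilon> powr \<alpha>)" by (rule ennreal_leI[OF le])
      finally show ?thesis .
    qed
    finally show "emeasure lborel {x\<in>{a..a+1}. cmod (es W id (insert m L0) x) < \<epsilon>} \<le> ennreal (K * \<epsilon> powr \<alpha>)" .
  qed
qed




lemma trig_es:
  assumes "trig_poly u" "u \<noteq> (\<lambda>x. 0)"
  shows "\<exists>W L. finite L \<and> L \<noteq> {} \<and> (\<forall>l\<in>L. W l \<noteq> 0) \<and> u = es W id L"
proof -
  obtain m a c where u: "u = (\<lambda>x. \<Sum>j<(m::nat). c j * exp (2 * of_real pi * \<i> * of_real (a j * x)))"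
    using assms(1) unfolding trig_poly_def by blast
  define fr where "fr j = 2 * pi * a j" for j
  define L0 where "L0 = fr ` {..<m}"
  define W where "W l = (\<Sum>j\<in>{j. j \<in> {..<m} \<and> fr j = l}. c j)" for l
  have e: "exp (2 * of_real pi * \<i> * of_real (a j * x)) = exp (\<i> * of_real (fr j * x))" for j x
    unfolding fr_def by (simp add: mult_ac)
  have u0: "u x = es W id L0 x" for x
  proof -
    have "u x = (\<Sum>j<m. c j * exp (\<i> * of_real (fr j * x)))" unfolding u e ..
    also have "\<dots> = (\<Sum>l\<in>L0. \<Sum>j\<in>{j. j \<in> {..<m} \<and> fr j = l}. c j * exp (\<i> * of_real (fr j * x)))"
      unfolding L0_def by (rule sum.image_gen) simp
    also have "\<dots> = (\<Sum>l\<in>L0. W l * exp (\<i> * of_real (l * x)))"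
      unfolding W_def sum_distrib_right by (intro sum.cong refl) auto
    finally show ?thesis unfolding es_def by simp
  qed
  define L where "L = {l\<in>L0. W l \<noteq> 0}"
  have fin: "finite L" unfolding L_def L0_def by auto
  have u1: "u x = es W id L x" for x
    unfolding u0 es_def L_def by (rule sum.mono_neutral_right) (auto simp: L0_def)
  have "L \<noteq> {}"
  proof
    assume "L = {}"
    then have "u = (\<lambda>x. 0)" using u1 by (auto simp: es_def)
    with assms(2) show False by simp
  qed
  then show ?thesis using fin u1 unfolding L_def by blast
qed

lemma plus_meas[measurable]: "(\<lambda>x::real. x + s) \<in> measurable lborel borel"
  by simp

lemma emeasure_translate:
  fixes A :: "real set"
  assumes "A \<in> sets borel"
  shows "emeasure lborel ((\<lambda>x. x + s) -` A) = emeasure lborel A"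
proof -
  have "emeasure lborel A = emeasure (distr lborel borel ((+) s)) A" by (simp add: lborel_distr_plus)
  also have "\<dots> = emeasure lborel ((+) s -` A \<inter> space lborel)"
    by (rule emeasure_distr) (use assms in auto)
  also have "(+) s -` A \<inter> space lborel = (\<lambda>x. x + s) -` A" by (auto simp: add.commute)
  finally show ?thesis by simp
qed

lemma AE_translate:
  assumes "AE x in lborel. P x"
  shows "AE x in lborel. P (x + (s::real))"
proof -
  have "AE x in distr lborel borel ((+) s). P x" unfolding lborel_distr_plus by (rule assms)
  then have "AE x in lborel. P (s + x)" by (rule AE_distrD[rotated]) simp
  then show ?thesis by (simp add: add.commute)
qed

lemma sub_shift:
  assumes fin: "finite L" and K: "\<And>a \<epsilon>. 0 < \<epsilon> \<Longrightarrow> \<epsilon> \<le> 1 \<Longrightarrow>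
     emeasure lborel {x\<in>{a..a+1}. cmod (es W id L x) < \<epsilon>} \<le> ennreal (K * \<epsilon> powr \<alpha>)"
    and e: "0 < \<epsilon>" "\<epsilon> \<le> 1"
  shows "emeasure lborel {x\<in>{a..a+1}. cmod (es W id L (x + s)) < \<epsilon>} \<le> ennreal (K * \<epsilon> powr \<alpha>)"
proof -
  have m: "{y\<in>{a+s..a+s+1}. cmod (es W id L y) < \<epsilon>} \<in> sets borel"
    using fin by measurable
  have "{x\<in>{a..a+1}. cmod (es W id L (x + s)) < \<epsilon>} = (\<lambda>x. x + s) -` {y\<in>{a+s..a+s+1}. cmod (es W id L y) < \<epsilon>}"
    by auto
  then show ?thesis using emeasure_translate[OF m, of s] K[OF e, of "a + s"] by (simp add: add_ac)
qed

primrec Sig :: "nat \<Rightarrow> (nat \<Rightarrow> real) \<Rightarrow> nat \<Rightarrow> real set" where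
  "Sig n d 0 = {0}"
| "Sig n d (Suc i) = (\<Union>j\<in>{2..n}. (\<lambda>s. s + d j) ` Sig n d i)"

lemma Sig_finite: "finite (Sig n d i)"
  by (induction i) auto

lemma Sig_card: "n \<ge> 1 \<Longrightarrow> card (Sig n d i) \<le> n ^ i"
proof (induction i)
  case 0 then show ?case by simp
next
  case (Suc i)
  have "card (Sig n d (Suc i)) \<le> (\<Sum>j\<in>{2..n}. card ((\<lambda>s. s + d j) ` Sig n d i))"
    by (simp add: card_UN_le)
  also have "\<dots> \<le> (\<Sum>j\<in>{2..n}. n ^ i)"
    by (intro sum_mono order_trans[OF card_image_le[OF Sig_finite]] Suc.IH Suc.prems)
  also have "\<dots> \<le> n * n ^ i" by simp
  finally show ?case by simp
qed

lemma Sig_lower: "(\<And>j. j \<in> {2..n} \<Longrightarrow> d j \<ge> \<delta>) \<Longrightarrow> s \<in> Sig n d i \<Longrightarrow> s \<ge> real i * \<delta>"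
proof (induction i arbitrary: s)
  case 0 then show ?case by simp
next
  case (Suc i)
  have "s \<in> (\<Union>j\<in>{2..n}. (\<lambda>s. s + d j) ` Sig n d i)" using Suc.prems(2) by simp
  then obtain j t where jt: "j \<in> {2..n}" "t \<in> Sig n d i" "s = t + d j" by blast
  have "t \<ge> real i * \<delta>" using Suc.IH[OF Suc.prems(1) jt(2)] .
  moreover have "d j \<ge> \<delta>" using Suc.prems(1)[OF jt(1)] .
  ultimately show ?case using jt(3) by (simp add: algebra_simps)
qed

lemma Sig_step: "s \<in> Sig n d i \<Longrightarrow> j \<in> {2..n} \<Longrightarrow> s + d j \<in> Sig n d (Suc i)"
  by auto

lemma Sig_countable: "countable (Sig n d i)"
  using Sig_finite by (rule countable_finite)

lemma decay_from_limsup: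
  fixes f :: "real \<Rightarrow> complex"
  assumes "\<not> (Limsup at_top (\<lambda>x. ereal (norm (f x) * exp (c * x\<^sup>2))) > 0)"
  shows "\<exists>T. \<forall>y\<ge>T. cmod (f y) \<le> exp (- c * y\<^sup>2)"
proof -
  have "Limsup at_top (\<lambda>x. ereal (norm (f x) * exp (c * x\<^sup>2))) \<le> 0" using assms
    by (simp add: not_less)
  then have "Limsup at_top (\<lambda>x. ereal (norm (f x) * exp (c * x\<^sup>2))) < 1"
    by (rule order_le_less_trans) simp
  then have "eventually (\<lambda>x. ereal (norm (f x) * exp (c * x\<^sup>2)) < 1) at_top"
    by (rule Limsup_lessD)
  then obtain T where T: "\<And>y. y \<ge> T \<Longrightarrow> norm (f y) * exp (c * y\<^sup>2) < 1"
    unfolding eventually_at_top_linorder by auto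
  have "cmod (f y) \<le> exp (- c * y\<^sup>2)" if "y \<ge> T" for y
  proof -
    have "cmod (f y) * exp (c * y\<^sup>2) \<le> 1" using T[OF that] by simp
    then have "cmod (f y) \<le> 1 / exp (c * y\<^sup>2)" by (simp add: field_simps)
    then show ?thesis by (simp add: exp_minus field_simps)
  qed
  then show ?thesis by blast
qed




lemma step_lemma:
  fixes f :: "real \<Rightarrow> complex" and n :: nat and u :: "nat \<Rightarrow> real \<Rightarrow> complex" and b :: "nat \<Rightarrow> real" and M :: real
  assumes n1: "n \<ge> 1"
    and E: "(\<Sum>j=1..n. u j y * f (y + b j)) = 0"
    and u1: "u 1 y \<noteq> 0" and Fy: "f (y + b 1) \<noteq> 0"
    and M: "\<And>j. j \<in> {2..n} \<Longrightarrow> cmod (u j y) \<le> M"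
  shows "\<exists>j\<in>{2..n}. cmod (f (y + b 1)) * cmod (u 1 y) \<le> M * real n * cmod (f (y + b j))"
proof (rule ccontr)
  assume "\<not> ?thesis"
  then have lt: "M * real n * cmod (f (y + b j)) < cmod (f (y + b 1)) * cmod (u 1 y)" if "j \<in> {2..n}" for j
    using that by (auto simp: not_le)
  define P where "P = cmod (f (y + b 1)) * cmod (u 1 y)"
  have Ppos: "P > 0" unfolding P_def using u1 Fy by simp
  have split: "{1..n} = insert 1 {2..n}" using n1 by auto
  have "(\<Sum>j=1..n. u j y * f (y + b j)) = u 1 y * f (y + b 1) + (\<Sum>j=2..n. u j y * f (y + b j))"
    unfolding split by (subst sum.insert) auto
  with E have "u 1 y * f (y + b 1) = - (\<Sum>j=2..n. u j y * f (y + b j))" by (simp add: eq_neg_iff_add_eq_0)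
  then have "cmod (u 1 y * f (y + b 1)) = cmod (\<Sum>j=2..n. u j y * f (y + b j))"
    by (metis norm_minus_cancel)
  then have "P = cmod (\<Sum>j=2..n. u j y * f (y + b j))" unfolding P_def by (simp add: norm_mult mult.commute)
  also have "\<dots> \<le> (\<Sum>j=2..n. cmod (u j y) * cmod (f (y + b j)))"
    by (rule order_trans[OF norm_sum]) (simp add: norm_mult)
  also have "\<dots> \<le> (\<Sum>j=2..n. P / n)"
  proof (rule sum_mono)
    fix j assume j: "j \<in> {2..n}"
    have "cmod (u j y) * cmod (f (y + b j)) \<le> M * cmod (f (y + b j))"
      using M[OF j] by (intro mult_right_mono) auto
    also have "\<dots> \<le> P / n" using lt[OF j] n1 unfolding P_def by (simp add: field_simps)
    finally show "cmod (u j y) * cmod (f (y + b j)) \<le> P / n" .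
  qed
  also have "\<dots> = (real n - 1) * (P / n)" using n1 by (simp add: of_nat_diff)
  also have "\<dots> < P" using Ppos n1 by (simp add: field_simps)
  finally show False by simp
qed

lemma path_lemma:
  fixes f :: "real \<Rightarrow> complex" and n :: nat and u :: "nat \<Rightarrow> real \<Rightarrow> complex" and b :: "nat \<Rightarrow> real" and M :: real
  assumes n1: "n \<ge> 1" and th: "\<theta> > 0" and C: "C \<ge> 0" and M0: "M \<ge> 0"
    and good: "\<And>i s. s \<in> Sig n (\<lambda>j. b j - b 1) i \<Longrightarrow>
       (\<Sum>j=1..n. u j (x + s) * f (x + s + b j)) = 0 \<and> \<theta> * exp (- C * i) \<le> cmod (u 1 (x + s))"
    and Mb: "\<And>j y. j \<in> {2..n} \<Longrightarrow> cmod (u j y) \<le> M"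
    and Fx: "f (x + b 1) \<noteq> 0"
  shows "\<exists>s\<in>Sig n (\<lambda>j. b j - b 1) i. cmod (f (x + b 1)) * \<theta> ^ i * exp (- C * real i ^ 2)
            \<le> (M * n) ^ i * cmod (f (x + s + b 1))"
proof (induction i)
  case 0
  show ?case by (rule bexI[of _ 0]) auto
next
  case (Suc i)
  then obtain s where s: "s \<in> Sig n (\<lambda>j. b j - b 1) i"
    and le: "cmod (f (x + b 1)) * \<theta> ^ i * exp (- C * real i ^ 2) \<le> (M * n) ^ i * cmod (f (x + s + b 1))"
    by blast
  have lpos: "cmod (f (x + b 1)) * \<theta> ^ i * exp (- C * real i ^ 2) > 0" using Fx th by simp
  then have Fs: "f (x + s + b 1) \<noteq> 0" using le by auto
  have g: "(\<Sum>j=1..n. u j (x + s) * f (x + s + b j)) = 0" "\<theta> * exp (- C * i) \<le> cmod (u 1 (x + s))"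
    using good[OF s] by auto
  have "\<theta> * exp (- C * i) > 0" using th by simp
  then have u1: "u 1 (x + s) \<noteq> 0" using g(2) by auto
  obtain j where j: "j \<in> {2..n}"
    and st: "cmod (f (x + s + b 1)) * cmod (u 1 (x + s)) \<le> M * real n * cmod (f (x + s + b j))"
    using step_lemma[of n u "x + s" f b M, OF n1 g(1) u1 Fs Mb] by blast
  define s' where "s' = s + (b j - b 1)"
  have s': "s' \<in> Sig n (\<lambda>j. b j - b 1) (Suc i)" unfolding s'_def using Sig_step[OF s j] by simp
  have fs': "f (x + s + b j) = f (x + s' + b 1)" unfolding s'_def by (simp add: algebra_simps)
  have e: "exp (- C * real (Suc i) ^ 2) \<le> exp (- C * real i ^ 2) * exp (- C * i)"
  proof -
    have "- C * real (Suc i) ^ 2 \<le> - C * real i ^ 2 + - C * i"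
    proof -
      have a: "0 \<le> C * real i" using C by simp
      have "- C * real (Suc i) ^ 2 = - C * real i ^ 2 + - C * i + (- C * i - C)"
        by (simp add: power2_eq_square algebra_simps)
      then show ?thesis using a C by linarith
    qed
    then show ?thesis by (simp flip: exp_add)
  qed
  have "cmod (f (x + b 1)) * \<theta> ^ Suc i * exp (- C * real (Suc i) ^ 2)
      \<le> cmod (f (x + b 1)) * \<theta> ^ Suc i * (exp (- C * real i ^ 2) * exp (- C * i))"
    using e th by (intro mult_left_mono) auto
  also have "\<dots> = (cmod (f (x + b 1)) * \<theta> ^ i * exp (- C * real i ^ 2)) * (\<theta> * exp (- C * i))"
    by (simp add: algebra_simps)
  also have "\<dots> \<le> ((M * n) ^ i * cmod (f (x + s + b 1))) * cmod (u 1 (x + s))"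
    by (rule mult_mono[OF le g(2)]) (use M0 th in auto)
  also have "\<dots> = (M * n) ^ i * (cmod (f (x + s + b 1)) * cmod (u 1 (x + s)))" by (simp add: algebra_simps)
  also have "\<dots> \<le> (M * n) ^ i * (M * real n * cmod (f (x + s' + b 1)))"
    using st fs' M0 by (intro mult_left_mono) auto
  also have "\<dots> = (M * n) ^ Suc i * cmod (f (x + s' + b 1))" by (simp add: algebra_simps)
  finally show ?case using s' by blast
qed

lemma nogood:
  fixes f :: "real \<Rightarrow> complex" and n :: nat and u :: "nat \<Rightarrow> real \<Rightarrow> complex" and b :: "nat \<Rightarrow> real" and M :: real
  assumes n1: "n \<ge> 1" and th: "\<theta> > 0" and C: "C \<ge> 0" and M1: "M \<ge> 1" and dl: "\<delta> > 0"
    and dd: "\<And>j. j \<in> {2..n} \<Longrightarrow> b j - b 1 \<ge> \<delta>"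
    and good: "\<And>i s. s \<in> Sig n (\<lambda>j. b j - b 1) i \<Longrightarrow>
       (\<Sum>j=1..n. u j (x + s) * f (x + s + b j)) = 0 \<and> \<theta> * exp (- C * i) \<le> cmod (u 1 (x + s))"
    and Mb: "\<And>j y. j \<in> {2..n} \<Longrightarrow> cmod (u j y) \<le> M"
    and decay: "\<And>c. c > 0 \<Longrightarrow> \<exists>T. \<forall>y\<ge>T. cmod (f y) \<le> exp (- c * y\<^sup>2)"
  shows "f (x + b 1) = 0"
proof (rule ccontr)
  assume Fx: "f (x + b 1) \<noteq> 0"
  define c where "c = (C + 1) / \<delta>^2"
  have cpos: "c > 0" unfolding c_def using C dl by simp
  have cd: "c * \<delta>^2 = C + 1" unfolding c_def using dl by simp
  obtain T where T: "\<And>y. y \<ge> T \<Longrightarrow> cmod (f y) \<le> exp (- c * y\<^sup>2)" using decay[OF cpos] by blast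
  define X where "X = x + b 1"
  define a0 where "a0 = cmod (f X)"
  have a0: "a0 > 0" unfolding a0_def X_def using Fx by simp
  define lF where "lF = ln a0"
  have Mn: "M * n > 0" using M1 n1 by simp
  define L' where "L' = ln (M * n) - ln \<theta> + 2 * c * \<delta> * \<bar>X\<bar>"
  obtain i :: nat where i: "max (max 1 (L' + 1 + \<bar>lF\<bar>)) ((\<bar>T\<bar> + \<bar>X\<bar>) / \<delta>) < real i"
    using reals_Archimedean2 by blast
  have i1: "real i \<ge> 1" and i2: "real i \<ge> L' + 1 + \<bar>lF\<bar>" and i3: "real i * \<delta> \<ge> \<bar>T\<bar> + \<bar>X\<bar>"
    using i dl by (auto simp: field_simps)
  obtain s where s: "s \<in> Sig n (\<lambda>j. b j - b 1) i"
    and le: "a0 * \<theta> ^ i * exp (- C * real i ^ 2) \<le> (M * n) ^ i * cmod (f (x + s + b 1))"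
    using path_lemma[of n \<theta> C M b u x f i, OF n1 th C _ good Mb Fx] M1 unfolding a0_def X_def by auto
  have sl: "s \<ge> real i * \<delta>" by (rule Sig_lower[OF _ s]) (use dd in auto)
  define y where "y = x + s + b 1"
  have y0: "X + real i * \<delta> \<ge> 0" "X + real i * \<delta> \<ge> T" using i3 by auto
  have yge: "y \<ge> X + real i * \<delta>" unfolding y_def X_def using sl by simp
  have "cmod (f y) \<le> exp (- c * y\<^sup>2)" using T y0 yge by auto
  also have "\<dots> \<le> exp (- c * (X + real i * \<delta>)\<^sup>2)"
  proof -
    have "(X + real i * \<delta>)\<^sup>2 \<le> y\<^sup>2" using y0 yge by (intro power_mono) auto
    then show ?thesis using cpos by simp
  qed
  finally have fy: "cmod (f y) \<le> exp (- c * (X + real i * \<delta>)\<^sup>2)" .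
  have "a0 * \<theta> ^ i * exp (- C * real i ^ 2) \<le> (M * n) ^ i * exp (- c * (X + real i * \<delta>)\<^sup>2)"
    using le fy Mn unfolding y_def by (meson order_trans mult_left_mono zero_le_power less_imp_le)
  moreover have "a0 * \<theta> ^ i * exp (- C * real i ^ 2) = exp (lF + real i * ln \<theta> - C * real i ^ 2)"
    unfolding lF_def using a0 th by (simp add: exp_add exp_diff exp_of_nat_mult exp_minus field_simps)
  moreover have "(M * n) ^ i * exp (- c * (X + real i * \<delta>)\<^sup>2) = exp (real i * ln (M * n) - c * (X + real i * \<delta>)\<^sup>2)"
    using Mn by (simp add: exp_diff exp_of_nat_mult exp_minus field_simps)
  ultimately have ineq: "lF + real i * ln \<theta> - C * real i ^ 2 \<le> real i * ln (M * n) - c * (X + real i * \<delta>)\<^sup>2"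
    by simp
  have sq: "c * (X + real i * \<delta>)\<^sup>2 \<ge> (C + 1) * real i ^ 2 - 2 * c * \<delta> * \<bar>X\<bar> * real i"
  proof -
    have "c * (X + real i * \<delta>)\<^sup>2 = c * X\<^sup>2 + 2 * c * \<delta> * X * real i + (c * \<delta>^2) * real i ^ 2"
      by (simp add: power2_eq_square algebra_simps)
    moreover have "c * X\<^sup>2 \<ge> 0" using cpos by simp
    moreover have "2 * c * \<delta> * X * real i \<ge> - (2 * c * \<delta> * \<bar>X\<bar> * real i)"
    proof -
      have "2 * c * \<delta> * real i \<ge> 0" using cpos dl by simp
      then have "(2 * c * \<delta> * real i) * X \<ge> (2 * c * \<delta> * real i) * (- \<bar>X\<bar>)"
        by (intro mult_left_mono) auto
      then show ?thesis by (simp add: algebra_simps)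
    qed
    ultimately show ?thesis unfolding cd by linarith
  qed
  have "lF \<le> real i * L' - real i ^ 2"
    using ineq sq unfolding L'_def by (simp add: algebra_simps power2_eq_square)
  also have "\<dots> = real i * (L' - real i)" by (simp add: power2_eq_square algebra_simps)
  also have "\<dots> \<le> real i * (- 1 - \<bar>lF\<bar>)" using i1 i2 by (intro mult_left_mono) auto
  also have "\<dots> \<le> 1 * (- 1 - \<bar>lF\<bar>)" using i1 by (intro mult_right_mono_neg) auto
  finally show False by simp
qed




lemma geo_sum: "(\<Sum>i. ennreal (A * (1/2) ^ i)) = ennreal (2 * A)" if "A \<ge> 0" for A :: real
proof -
  have s: "summable (\<lambda>i. A * (1/2::real) ^ i)"
    by (intro summable_mult summable_geometric) simp
  have "(\<Sum>i. ennreal (A * (1/2) ^ i)) = ennreal (\<Sum>i. A * (1/2::real) ^ i)"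
    by (rule suminf_ennreal2) (use that s in auto)
  also have "(\<Sum>i. A * (1/2::real) ^ i) = A * (\<Sum>i. (1/2::real) ^ i)"
    by (rule suminf_mult) (rule summable_geometric, simp)
  also have "(\<Sum>i. (1/2::real) ^ i) = 2" by (subst suminf_geometric) auto
  finally show ?thesis by (simp add: mult.commute)
qed

lemma part1:
  fixes f :: "real \<Rightarrow> complex" and n :: nat and u :: "nat \<Rightarrow> real \<Rightarrow> complex" and b :: "nat \<Rightarrow> real"
  assumes f_meas[measurable]: "f \<in> borel_measurable lborel"
    and f_nz: "\<not> (AE x in lborel. f x = 0)"
    and n1: "n \<ge> 1" and inj: "inj_on b {1..n}" and bmin: "\<forall>j\<in>{1..n}. b 1 \<le> b j"
    and tp: "trig_poly (u 1)" and unz: "u 1 \<noteq> (\<lambda>x. 0)"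
    and ubnd: "\<forall>j\<in>{2..n}. \<exists>M. \<forall>x. norm (u j x) \<le> M"
    and eqn: "AE x in lborel. (\<Sum>j=1..n. u j x * f (x + b j)) = 0"
    and decay: "\<And>c. c > 0 \<Longrightarrow> \<exists>T. \<forall>y\<ge>T. cmod (f y) \<le> exp (- c * y\<^sup>2)"
  shows False
proof -
  obtain W L where finL: "finite L" and neL: "L \<noteq> {}" and nzW: "\<forall>l\<in>L. W l \<noteq> 0" and u1: "u 1 = es W id L"
    using trig_es[OF tp unz] by blast
  obtain K \<alpha> where K: "K > 0" and al: "\<alpha> > 0" and Kb: "\<And>a \<epsilon>. 0 < \<epsilon> \<Longrightarrow> \<epsilon> \<le> 1 \<Longrightarrow>
     emeasure lborel {x\<in>{a..a+1}. cmod (es W id L x) < \<epsilon>} \<le> ennreal (K * \<epsilon> powr \<alpha>)"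
    using sub[OF finL neL nzW] by blast
  define d where "d j = b j - b 1" for j
  have dpos: "d j > 0" if "j \<in> {2..n}" for j
  proof -
    have "b j \<noteq> b 1" using inj that n1 unfolding inj_on_def by (metis atLeastAtMost_iff le_numeral_extra(4) not_numeral_le_zero one_le_numeral order_trans rel_simps(45) numeral_le_one_iff semiring_norm(69))
    moreover have "b 1 \<le> b j" using bmin that by auto
    ultimately show ?thesis unfolding d_def by simp
  qed
  define \<delta> where "\<delta> = Min (insert 1 (d ` {2..n}))"
  have dl: "\<delta> > 0" unfolding \<delta>_def using dpos by (subst Min_gr_iff) auto
  have dd: "b j - b 1 \<ge> \<delta>" if "j \<in> {2..n}" for j
    unfolding \<delta>_def using that by (metis Min_le d_def finite_atLeastAtMost finite_imageI finite_insert image_eqI insertCI)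
  obtain Mf where Mf: "\<And>j x. j \<in> {2..n} \<Longrightarrow> norm (u j x) \<le> Mf j"
    using ubnd by metis
  define M where "M = Max (insert 1 (Mf ` {2..n}))"
  have M1: "M \<ge> 1" unfolding M_def by simp
  have Mb: "cmod (u j y) \<le> M" if "j \<in> {2..n}" for j y
    using Mf[OF that, of y] that unfolding M_def by (meson Max_ge finite_atLeastAtMost finite_imageI finite_insert image_eqI insertCI order_trans)
  define C where "C = ln (2 * real n) / \<alpha>"
  have C0: "C \<ge> 0" unfolding C_def using n1 al by simp
  have eC: "exp (- C * \<alpha>) = 1 / (2 * real n)"
    unfolding C_def using al n1 by (simp add: exp_minus inverse_eq_divide)
  define E where "E y \<longleftrightarrow> (\<Sum>j=1..n. u j y * f (y + b j)) = 0" for y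
  have AEall: "AE x in lborel. \<forall>i. \<forall>s\<in>Sig n (\<lambda>j. b j - b 1) i. E (x + s)"
  proof -
    have "AE x in lborel. E (x + s)" for s
      using AE_translate[OF eqn, of s] unfolding E_def .
    then show ?thesis
      by (subst AE_all_countable, intro allI, subst AE_ball_countable) (auto intro: Sig_countable)
  qed
  have noF: "\<exists>i. \<exists>s\<in>Sig n (\<lambda>j. b j - b 1) i. cmod (u 1 (x + s)) < \<theta> * exp (- C * i)"
    if th: "\<theta> > 0" and Ex: "\<forall>i. \<forall>s\<in>Sig n (\<lambda>j. b j - b 1) i. E (x + s)" and Fx: "f (x + b 1) \<noteq> 0" for \<theta> x
  proof (rule ccontr)
    assume "\<not> ?thesis"
    then have g: "\<And>i s. s \<in> Sig n (\<lambda>j. b j - b 1) i \<Longrightarrow>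
       (\<Sum>j=1..n. u j (x + s) * f (x + s + b j)) = 0 \<and> \<theta> * exp (- C * i) \<le> cmod (u 1 (x + s))"
      using Ex unfolding E_def by (auto simp: not_less add.assoc)
    have "f (x + b 1) = 0"
      by (rule nogood[OF n1 th C0 M1 dl dd g Mb decay]) auto
    with Fx show False by simp
  qed
  have Zk: "emeasure lborel {x\<in>{a..a+1}. f (x + b 1) \<noteq> 0} = 0" for a :: real
  proof -
    define Z where "Z = {x\<in>{a..a+1}. f (x + b 1) \<noteq> 0}"
    have bound: "emeasure lborel Z \<le> ennreal (2 * (K * \<theta> powr \<alpha>))" if th: "\<theta> > 0" "\<theta> \<le> 1" for \<theta>
    proof -
      define A where "A i s = {x\<in>{a..a+1}. cmod (u 1 (x + s)) < \<theta> * exp (- C * real i)}" for i :: nat and s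
      define B where "B = (\<Union>i. \<Union>s\<in>Sig n (\<lambda>j. b j - b 1) i. A i s)"
      have Am: "A i s \<in> sets lborel" for i s
        unfolding A_def u1 using finL by measurable
      have Bim: "(\<Union>s\<in>Sig n (\<lambda>j. b j - b 1) i. A i s) \<in> sets lborel" for i
        using Am Sig_finite by blast
      have Bm: "B \<in> sets lborel" unfolding B_def using Bim by blast
      have "AE x in lborel. x \<in> Z \<longrightarrow> x \<in> B"
        using AEall
      proof (eventually_elim)
        case (elim x)
        show ?case
        proof
          assume "x \<in> Z"
          then have "x \<in> {a..a+1}" "f (x + b 1) \<noteq> 0" unfolding Z_def by auto
          then show "x \<in> B" using noF[OF th(1) elim] unfolding B_def A_def by auto
        qed
      qed
      then have "emeasure lborel Z \<le> emeasure lborel B" by (rule emeasure_mono_AE) (rule Bm)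
      also have "\<dots> \<le> (\<Sum>i. emeasure lborel (\<Union>s\<in>Sig n (\<lambda>j. b j - b 1) i. A i s))"
        unfolding B_def by (rule emeasure_subadditive_countably) (use Bim in auto)
      also have "\<dots> \<le> (\<Sum>i. ennreal (K * \<theta> powr \<alpha> * (1/2) ^ i))"
      proof (rule suminf_le[OF _ summableI summableI])
        fix i
        define \<epsilon> where "\<epsilon> = \<theta> * exp (- C * real i)"
        have e: "0 < \<epsilon>" "\<epsilon> \<le> 1"
        proof -
          show "0 < \<epsilon>" unfolding \<epsilon>_def using th by simp
          have "exp (- C * real i) \<le> 1" using C0 by simp
          then show "\<epsilon> \<le> 1" unfolding \<epsilon>_def using th by (metis mult_le_one less_imp_le exp_ge_zero)
        qed
        have "emeasure lborel (\<Union>s\<in>Sig n (\<lambda>j. b j - b 1) i. A i s) \<le> (\<Sum>s\<in>Sig n (\<lambda>j. b j - b 1) i. emeasure lborel (A i s))"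
          by (rule emeasure_subadditive_finite) (use Sig_finite Am in auto)
        also have "\<dots> \<le> (\<Sum>s\<in>Sig n (\<lambda>j. b j - b 1) i. ennreal (K * \<epsilon> powr \<alpha>))"
        proof (rule sum_mono)
          fix s
          show "emeasure lborel (A i s) \<le> ennreal (K * \<epsilon> powr \<alpha>)"
            unfolding A_def u1 \<epsilon>_def[symmetric] by (rule sub_shift[OF finL Kb e])
        qed
        also have "\<dots> = ennreal (real (card (Sig n (\<lambda>j. b j - b 1) i)) * (K * \<epsilon> powr \<alpha>))"
          by (simp only: sum_constant ennreal_of_nat_eq_real_of_nat) (rule ennreal_mult'[symmetric], simp)
        also have "\<dots> \<le> ennreal (K * \<theta> powr \<alpha> * (1/2) ^ i)"
        proof (rule ennreal_leI)
          have cardb: "real (card (Sig n (\<lambda>j. b j - b 1) i)) \<le> real n ^ i"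
            using Sig_card[OF n1] by (metis of_nat_le_iff of_nat_power)
          have "\<epsilon> powr \<alpha> = \<theta> powr \<alpha> * exp (- C * \<alpha>) ^ i"
            unfolding \<epsilon>_def using th by (simp add: powr_mult exp_powr_real flip: exp_of_nat_mult)
          also have "\<dots> = \<theta> powr \<alpha> * (1 / (2 * real n)) ^ i" unfolding eC ..
          finally have ep: "\<epsilon> powr \<alpha> = \<theta> powr \<alpha> * (1 / (2 * real n)) ^ i" .
          have "real (card (Sig n (\<lambda>j. b j - b 1) i)) * (K * \<epsilon> powr \<alpha>) \<le> real n ^ i * (K * \<epsilon> powr \<alpha>)"
            using K by (intro mult_right_mono cardb) auto
          also have "\<dots> = K * \<theta> powr \<alpha> * (real n * (1 / (2 * real n))) ^ i"
            unfolding ep power_mult_distrib by (simp only: ac_simps)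
          also have "real n * (1 / (2 * real n)) = 1/2" using n1 by simp
          finally show "real (card (Sig n (\<lambda>j. b j - b 1) i)) * (K * \<epsilon> powr \<alpha>) \<le> K * \<theta> powr \<alpha> * (1/2) ^ i" .
        qed
        finally show "emeasure lborel (\<Union>s\<in>Sig n (\<lambda>j. b j - b 1) i. A i s) \<le> ennreal (K * \<theta> powr \<alpha> * (1/2) ^ i)" .
      qed
      also have "\<dots> = ennreal (2 * (K * \<theta> powr \<alpha>))" by (rule geo_sum) (use K in simp)
      finally show ?thesis .
    qed
    have "emeasure lborel Z \<le> 0"
    proof (rule ennreal_le_epsilon)
      fix e :: real assume e: "0 < e"
      define \<theta> where "\<theta> = min 1 ((e / (2 * K)) powr (1 / \<alpha>))"
      have th: "\<theta> > 0" "\<theta> \<le> 1" unfolding \<theta>_def using e K by auto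
      have "\<theta> powr \<alpha> \<le> ((e / (2 * K)) powr (1 / \<alpha>)) powr \<alpha>"
        unfolding \<theta>_def using th al by (intro powr_mono2) (auto simp: \<theta>_def)
      also have "\<dots> = e / (2 * K)" using al e K by (simp add: powr_powr)
      finally have "2 * (K * \<theta> powr \<alpha>) \<le> e" using K by (simp add: field_simps)
      then have "ennreal (2 * (K * \<theta> powr \<alpha>)) \<le> ennreal e" by (rule ennreal_leI)
      then show "emeasure lborel Z \<le> 0 + ennreal e" using bound[OF th] by simp
    qed
    then show ?thesis unfolding Z_def by simp
  qed
  have "AE x in lborel. f (x + b 1) = 0"
  proof (rule AE_I')
    show "(\<Union>k\<in>(UNIV::int set). {x\<in>{real_of_int k..real_of_int k+1}. f (x + b 1) \<noteq> 0}) \<in> null_sets lborel"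
    proof (rule null_sets_UN')
      fix k :: int
      have "{x\<in>{real_of_int k..real_of_int k+1}. f (x + b 1) \<noteq> 0} \<in> sets lborel" by measurable
      then show "{x\<in>{real_of_int k..real_of_int k+1}. f (x + b 1) \<noteq> 0} \<in> null_sets lborel"
        using Zk by (simp add: null_sets_def)
    qed simp
    show "{x \<in> space lborel. \<not> f (x + b 1) = 0} \<subseteq> (\<Union>k\<in>(UNIV::int set). {x\<in>{real_of_int k..real_of_int k+1}. f (x + b 1) \<noteq> 0})"
    proof
      fix x assume "x \<in> {x \<in> space lborel. \<not> f (x + b 1) = 0}"
      then show "x \<in> (\<Union>k\<in>(UNIV::int set). {x\<in>{real_of_int k..real_of_int k+1}. f (x + b 1) \<noteq> 0})"
        by (intro UN_I[of "\<lfloor>x\<rfloor>"]) auto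
    qed
  qed
  from AE_translate[OF this, of "- b 1"] have "AE x in lborel. f x = 0" by simp
  with f_nz show False by simp
qed




lemma es_zero:
  assumes finL: "finite L" and z: "\<And>x. es W id L x = 0"
  shows "\<forall>l\<in>L. W l = 0"
proof (rule ccontr)
  assume neg: "\<not> (\<forall>l\<in>L. W l = 0)"
  define L' where "L' = {l\<in>L. W l \<noteq> 0}"
  have fin': "finite L'" "L' \<noteq> {}" "\<forall>l\<in>L'. W l \<noteq> 0" using finL neg unfolding L'_def by auto
  have eq: "es W id L' x = es W id L x" for x
    unfolding es_def L'_def by (rule sum.mono_neutral_left) (use finL in auto)
  obtain K \<alpha> where K: "K > 0" and al: "\<alpha> > 0" and Kb: "\<And>a \<epsilon>. 0 < \<epsilon> \<Longrightarrow> \<epsilon> \<le> 1 \<Longrightarrow>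
     emeasure lborel {x\<in>{a..a+1}. cmod (es W id L' x) < \<epsilon>} \<le> ennreal (K * \<epsilon> powr \<alpha>)"
    using sub[OF fin'] by blast
  define \<epsilon> where "\<epsilon> = min 1 ((1 / (2 * K)) powr (1 / \<alpha>))"
  have e: "\<epsilon> > 0" "\<epsilon> \<le> 1" unfolding \<epsilon>_def using K by auto
  have "\<epsilon> powr \<alpha> \<le> ((1 / (2 * K)) powr (1 / \<alpha>)) powr \<alpha>"
    using e al by (intro powr_mono2) (auto simp: \<epsilon>_def)
  also have "\<dots> = 1 / (2 * K)" using al K by (simp add: powr_powr)
  finally have "K * \<epsilon> powr \<alpha> \<le> 1 / 2" using K by (simp add: field_simps)
  moreover have "emeasure lborel {x\<in>{0..0+1}. cmod (es W id L' x) < \<epsilon>} = 1"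
  proof -
    have "{x\<in>{0..0+1}. cmod (es W id L' x) < \<epsilon>} = {0..1::real}" using eq z e by auto
    then show ?thesis by simp
  qed
  ultimately have "ennreal 1 \<le> ennreal (1/2)"
    using Kb[OF e, of 0] by (metis ennreal_1 ennreal_leI order_trans)
  then show False by (subst (asm) ennreal_le_iff) auto
qed

lemma trig_poly_finite_sum:
  fixes A :: "(real \<times> real) set" and c :: "real \<times> real \<Rightarrow> complex"
  assumes "finite A"
  shows "trig_poly (\<lambda>x. \<Sum>p\<in>A. c p * exp (2 * of_real pi * \<i> * of_real (fst p * x)))"
proof -
  obtain h where h: "bij_betw h {0..<card A} A" using ex_bij_betw_nat_finite[OF assms] by blast
  have "(\<lambda>x. \<Sum>p\<in>A. c p * exp (2 * of_real pi * \<i> * of_real (fst p * x)))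
      = (\<lambda>x. \<Sum>j<card A. (c \<circ> h) j * exp (2 * of_real pi * \<i> * of_real ((fst \<circ> h) j * x)))"
    by (rule ext, subst sum.reindex_bij_betw[OF h, symmetric]) (simp add: lessThan_atLeast0)
  then show ?thesis unfolding trig_poly_def by blast
qed

lemma U_cont: "finite A \<Longrightarrow> continuous_on UNIV (\<lambda>x. \<Sum>p\<in>A. (c p :: complex) * exp (2 * of_real pi * \<i> * of_real (fst p * x)))"
  by (intro continuous_intros)

lemma U_bound: "cmod (\<Sum>p\<in>A. (c p :: complex) * exp (2 * of_real pi * \<i> * of_real (fst p * x))) \<le> (\<Sum>p\<in>A. cmod (c p))"
proof -
  have n: "cmod (exp (2 * of_real pi * \<i> * of_real (fst p * x))) = 1" for p
  proof -
    have "2 * of_real pi * \<i> * of_real (fst p * x) = \<i> * of_real (2 * pi * fst p * x)" by (simp add: mult_ac)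
    then show ?thesis by simp
  qed
  show ?thesis by (rule order_trans[OF norm_sum]) (simp add: norm_mult n)
qed




lemma part2:
  fixes f :: "real \<Rightarrow> complex" and S :: "(real \<times> real) set" and c :: "real \<times> real \<Rightarrow> complex"
  assumes f_meas: "f \<in> borel_measurable lborel"
    and f_nz: "\<not> (AE x in lborel. f x = 0)"
    and decay: "\<And>c. c > 0 \<Longrightarrow> \<exists>T. \<forall>y\<ge>T. cmod (f y) \<le> exp (- c * y\<^sup>2)"
    and finS: "finite S" and p0: "p0 \<in> S" "c p0 \<noteq> 0"
    and AE0: "AE x in lborel. (\<Sum>p\<in>S. c p * MT (fst p) (snd p) f x) = 0"
  shows False
proof -
  define U where "U t = (\<lambda>x. \<Sum>p\<in>{p\<in>S. snd p = t}. c p * exp (2 * of_real pi * \<i> * of_real (fst p * x)))" for t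
  define B0 where "B0 = snd ` S"
  define B' where "B' = {t\<in>B0. U t \<noteq> (\<lambda>x. 0)}"
  have finB0: "finite B0" unfolding B0_def using finS by simp
  have finB': "finite B'" unfolding B'_def using finB0 by simp
  have sumeq: "(\<Sum>p\<in>S. c p * MT (fst p) (snd p) f x) = (\<Sum>t\<in>B'. U t x * f (x - t))" for x
  proof -
    have "(\<Sum>p\<in>S. c p * MT (fst p) (snd p) f x) = (\<Sum>t\<in>B0. \<Sum>p\<in>{p\<in>S. snd p = t}. c p * MT (fst p) (snd p) f x)"
      unfolding B0_def by (rule sum.image_gen[OF finS])
    also have "\<dots> = (\<Sum>t\<in>B0. U t x * f (x - t))"
      unfolding U_def MT_def sum_distrib_right by (intro sum.cong refl) (auto simp: mult_ac)
    also have "\<dots> = (\<Sum>t\<in>B'. U t x * f (x - t))"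
      unfolding B'_def by (rule sum.mono_neutral_right[OF finB0]) auto
    finally show ?thesis .
  qed
  have t0: "snd p0 \<in> B'"
  proof -
    define A where "A = {p\<in>S. snd p = snd p0}"
    define g where "g p = 2 * pi * fst p" for p :: "real \<times> real"
    have injg: "inj_on g A" unfolding A_def g_def inj_on_def by (auto simp: prod_eq_iff)
    define W where "W l = c (the_inv_into A g l)" for l
    have finA: "finite A" unfolding A_def using finS by simp
    have "U (snd p0) x = es W id (g ` A) x" for x
    proof -
      have "es W id (g ` A) x = (\<Sum>p\<in>A. W (g p) * exp (\<i> * of_real (g p * x)))"
        unfolding es_def by (simp add: sum.reindex[OF injg])
      also have "\<dots> = U (snd p0) x"
        unfolding U_def A_def[symmetric]
      proof (rule sum.cong[OF refl])
        fix p assume p: "p \<in> A"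
        have "W (g p) = c p" unfolding W_def using the_inv_into_f_f[OF injg p] by simp
        then show "W (g p) * exp (\<i> * of_real (g p * x)) = c p * exp (2 * of_real pi * \<i> * of_real (fst p * x))"
          by (simp add: g_def mult_ac)
      qed
      finally show ?thesis by simp
    qed
    moreover have "U (snd p0) \<noteq> (\<lambda>x. 0)"
    proof
      assume "U (snd p0) = (\<lambda>x. 0)"
      then have "\<And>x. es W id (g ` A) x = 0" using calculation by metis
      then have "\<forall>l\<in>g ` A. W l = 0" by (rule es_zero[rotated]) (use finA in simp)
      moreover have "p0 \<in> A" unfolding A_def using p0 by simp
      ultimately have "W (g p0) = 0" by simp
      then have "c p0 = 0" unfolding W_def using the_inv_into_f_f[OF injg \<open>p0 \<in> A\<close>] by simp
      with p0 show False by simp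
    qed
    ultimately show ?thesis unfolding B'_def B0_def using p0 by auto
  qed
  have neB': "B' \<noteq> {}" using t0 by auto
  define tm where "tm = Max B'"
  have tm: "tm \<in> B'" unfolding tm_def using finB' neB' by simp
  have tmax: "t \<le> tm" if "t \<in> B'" for t unfolding tm_def using finB' that by simp
  define B'' where "B'' = B' - {tm}"
  define m where "m = card B''"
  obtain h where h: "bij_betw h {1..m} B''" unfolding m_def using ex_bij_betw_nat_finite_1[of B''] finB' B''_def by blast
  define \<tau> where "\<tau> j = (if j = 1 then tm else h (j - 1))" for j :: nat
  have \<tau>in: "\<tau> j \<in> B'" if "j \<in> {1..Suc m}" for j
  proof (cases "j = 1")
    case True then show ?thesis using tm unfolding \<tau>_def by simp
  next
    case False
    then have "j - 1 \<in> {1..m}" using that by auto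
    then have "h (j - 1) \<in> B''" using h by (auto simp: bij_betw_def)
    then show ?thesis unfolding \<tau>_def B''_def using False by simp
  qed
  have inj\<tau>: "inj_on \<tau> {1..Suc m}"
  proof (rule inj_onI)
    fix i j assume i: "i \<in> {1..Suc m}" and j: "j \<in> {1..Suc m}" and eq: "\<tau> i = \<tau> j"
    have hB: "h (k - 1) \<in> B''" if "k \<in> {1..Suc m}" "k \<noteq> 1" for k
    proof -
      have "k - 1 \<in> {1..m}" using that by auto
      then show ?thesis using h by (auto simp: bij_betw_def)
    qed
    show "i = j"
    proof (cases "i = 1"; cases "j = 1")
      assume "i = 1" "j = 1" then show ?thesis by simp
    next
      assume "i = 1" "j \<noteq> 1"
      then have "h (j - 1) = tm" using eq unfolding \<tau>_def by simp
      with hB[OF j \<open>j \<noteq> 1\<close>] show ?thesis unfolding B''_def by simp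
    next
      assume "i \<noteq> 1" "j = 1"
      then have "h (i - 1) = tm" using eq unfolding \<tau>_def by simp
      with hB[OF i \<open>i \<noteq> 1\<close>] show ?thesis unfolding B''_def by simp
    next
      assume "i \<noteq> 1" "j \<noteq> 1"
      then have "h (i - 1) = h (j - 1)" using eq unfolding \<tau>_def by simp
      moreover have "i - 1 \<in> {1..m}" "j - 1 \<in> {1..m}" using i j \<open>i \<noteq> 1\<close> \<open>j \<noteq> 1\<close> by auto
      moreover have "inj_on h {1..m}" using h by (simp add: bij_betw_def)
      ultimately have "i - 1 = j - 1" by (meson inj_onD)
      then show ?thesis using \<open>i \<noteq> 1\<close> \<open>j \<noteq> 1\<close> i j by auto
    qed
  qed
  have img: "\<tau> ` {1..Suc m} = B'"
  proof
    show "\<tau> ` {1..Suc m} \<subseteq> B'" using \<tau>in by auto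
    show "B' \<subseteq> \<tau> ` {1..Suc m}"
    proof
      fix t assume t: "t \<in> B'"
      show "t \<in> \<tau> ` {1..Suc m}"
      proof (cases "t = tm")
        case True then show ?thesis unfolding \<tau>_def by (intro image_eqI[of _ _ 1]) auto
      next
        case False
        then have "t \<in> B''" using t unfolding B''_def by simp
        then obtain k where k: "k \<in> {1..m}" "h k = t" using h by (auto simp: bij_betw_def)
        then show ?thesis unfolding \<tau>_def by (intro image_eqI[of _ _ "Suc k"]) auto
      qed
    qed
  qed
  define b where "b j = - \<tau> j" for j
  define u where "u j = U (\<tau> j)" for j
  show False
  proof (rule part1[of f "Suc m" b u])
    show "f \<in> borel_measurable lborel" by (rule f_meas)
    show "\<not> (AE x in lborel. f x = 0)" by (rule f_nz)
    show "Suc m \<ge> 1" by simp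
    show "inj_on b {1..Suc m}" unfolding b_def using inj\<tau> by (auto simp: inj_on_def)
    show "\<forall>j\<in>{1..Suc m}. b 1 \<le> b j" unfolding b_def using \<tau>in tmax by (auto simp: \<tau>_def)
    show "trig_poly (u 1)" unfolding u_def U_def by (rule trig_poly_finite_sum) (use finS in simp)
    show "u 1 \<noteq> (\<lambda>x. 0)" unfolding u_def using tm unfolding B'_def \<tau>_def by simp
    show "\<forall>j\<in>{2..Suc m}. \<exists>M. \<forall>x. norm (u j x) \<le> M"
      unfolding u_def U_def using U_bound by blast
    show "AE x in lborel. (\<Sum>j=1..Suc m. u j x * f (x + b j)) = 0"
      using AE0
    proof eventually_elim
      case (elim x)
      have "(\<Sum>j=1..Suc m. u j x * f (x + b j)) = (\<Sum>j\<in>{1..Suc m}. U (\<tau> j) x * f (x - \<tau> j))"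
        unfolding u_def b_def by simp
      also have "\<dots> = (\<Sum>t\<in>B'. U t x * f (x - t))"
        unfolding img[symmetric] by (simp only: sum.reindex[OF inj\<tau>] comp_def)
      also have "\<dots> = 0" using elim sumeq by simp
      finally show ?case .
    qed
    show "\<And>c. c > 0 \<Longrightarrow> \<exists>T. \<forall>y\<ge>T. cmod (f y) \<le> exp (- c * y\<^sup>2)" by (rule decay)
  qed
qed


theorem theorem2p3:
  fixes f :: "real \<Rightarrow> complex"
  assumes f_meas: "f \<in> borel_measurable lborel"
    and f_nz: "\<not> (AE x in lborel. f x = 0)"
  shows "(\<forall>(n::nat) (b::nat \<Rightarrow> real) (u::nat \<Rightarrow> real \<Rightarrow> complex).
            n \<ge> 1
          \<and> inj_on b {1..n}
          \<and> (\<forall>j\<in>{1..n}. b 1 \<le> b j)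
          \<and> trig_poly (u 1) \<and> u 1 \<noteq> (\<lambda>x. 0)
          \<and> (\<forall>j\<in>{2..n}. u j \<in> borel_measurable lborel \<and> (\<exists>M. \<forall>x. norm (u j x) \<le> M))
          \<and> (AE x in lborel. (\<Sum>j=1..n. u j x * f (x + b j)) = 0)
          \<longrightarrow> (\<exists>c>0. Limsup at_top (\<lambda>x. ereal (norm (f x) * exp (c * x\<^sup>2))) > 0))
       \<and> ((\<forall>c>0. ((\<lambda>x. norm (f x) * exp (c * x\<^sup>2)) \<longlongrightarrow> 0) at_top)
          \<longrightarrow> gabor_lin_indep f)"
proof (intro conjI allI impI)
  fix n :: nat and b :: "nat \<Rightarrow> real" and u :: "nat \<Rightarrow> real \<Rightarrow> complex"
  assume H: "n \<ge> 1
          \<and> inj_on b {1..n}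
          \<and> (\<forall>j\<in>{1..n}. b 1 \<le> b j)
          \<and> trig_poly (u 1) \<and> u 1 \<noteq> (\<lambda>x. 0)
          \<and> (\<forall>j\<in>{2..n}. u j \<in> borel_measurable lborel \<and> (\<exists>M. \<forall>x. norm (u j x) \<le> M))
          \<and> (AE x in lborel. (\<Sum>j=1..n. u j x * f (x + b j)) = 0)"
  show "\<exists>c>0. Limsup at_top (\<lambda>x. ereal (norm (f x) * exp (c * x\<^sup>2))) > 0"
  proof (rule ccontr)
    assume neg: "\<not> (\<exists>c>0. Limsup at_top (\<lambda>x. ereal (norm (f x) * exp (c * x\<^sup>2))) > 0)"
    have decay: "\<exists>T. \<forall>y\<ge>T. cmod (f y) \<le> exp (- c * y\<^sup>2)" if c: "c > 0" for c
      using neg c by (intro decay_from_limsup) blast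
    have ub: "\<forall>j\<in>{2..n}. \<exists>M. \<forall>x. norm (u j x) \<le> M" using H by blast
    show False
      by (rule part1[of f n b u, OF f_meas f_nz _ _ _ _ _ ub _ decay]) (use H in auto)
  qed
next
  assume dec: "\<forall>c>0. ((\<lambda>x. norm (f x) * exp (c * x\<^sup>2)) \<longlongrightarrow> 0) at_top"
  have decay: "\<exists>T. \<forall>y\<ge>T. cmod (f y) \<le> exp (- c * y\<^sup>2)" if c: "c > 0" for c
  proof -
    have "eventually (\<lambda>x. norm (f x) * exp (c * x\<^sup>2) < 1) at_top"
      using dec c by (intro order_tendstoD(2)) auto
    then obtain T where T: "\<And>y. y \<ge> T \<Longrightarrow> norm (f y) * exp (c * y\<^sup>2) < 1"
      unfolding eventually_at_top_linorder by auto
    have "cmod (f y) \<le> exp (- c * y\<^sup>2)" if "y \<ge> T" for y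
    proof -
      have "cmod (f y) * exp (c * y\<^sup>2) \<le> 1" using T[OF that] by simp
      then have "cmod (f y) \<le> 1 / exp (c * y\<^sup>2)" by (simp add: field_simps)
      then show ?thesis by (simp add: exp_minus field_simps)
    qed
    then show ?thesis by blast
  qed
  show "gabor_lin_indep f"
    unfolding gabor_lin_indep_def
  proof (intro allI impI notI)
    fix S :: "(real \<times> real) set" and c :: "real \<times> real \<Rightarrow> complex"
    assume finS: "finite S" and ex: "\<exists>p\<in>S. c p \<noteq> 0"
      and AE0: "AE x in lborel. (\<Sum>p\<in>S. c p * MT (fst p) (snd p) f x) = 0"
    obtain p0 where p0: "p0 \<in> S" "c p0 \<noteq> 0" using ex by blast
    show False by (rule part2[OF f_meas f_nz decay finS p0 AE0])
  qed
qed

end
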